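(* Let $\mathcal{V}$ be a finite veering triangulation with face set $F$, let $w$ be a weight system on $\mathcal{V}$, $F_w=\{f\in F: w_f>0\}$, and $\varphi\in\mathrm{Aut}^+(\mathcal{Q}_{\mathcal{V},w})$. For $f\in F_w$ define the sequence $g^\varphi(f)=(g_i)_{i\ge1}$ of triangles of $\mathcal{Q}_{\mathcal{V},w}$ by $g_1=\varphi(L(f))$ and, for $i\ge1$, stop if $g_i\in U(F_w)$, and otherwise set $g_{i+1}=\varphi(\mathfrak{a}(g_i))$. Then for every $f\in F_w$ the sequence $g^\varphi(f)$ is finite, and if $f,f'\in F_w$ are distinct, then the last elements of $g^\varphi(f)$ and $g^\varphi(f')$ are distinct.
   Context: A veering triangulation is in particular an ideal triangulation of a 3-manifold with a taut structure: a coorientation of faces such that each tetrahedron has two faces cooriented out and two cooriented in, and each edge is the top diagonal (common edge of the two outward-cooriented faces) of exactly one tetrahedron and the bottom diagonal of exactly one. For an edge $e$, its two sides are separated by the tetrahedra where $e$ is top and bottom diagonal. A weight system $w=(w_f)$ is a nonzero nonnegative integral solution to the branch equations (for each edge, the weights of faces on the two sides have equal sums). Pulling apart sheets of $\sum w_f f$ gives an embedded surface triangulated by $\mathcal{Q}_{\mathcal{V},w}$, which has exactly $w_f$ triangles that are copies of each face $f$. The copies of a face $f$ are linearly ordered along the coorientation; $L(f)$ and $U(f)$ are the lowermost and uppermost copies, $L(F_w)$ and $U(F_w)$ the sets of these, and for a copy $y$ that is not uppermost, $\mathfrak{a}(y)$ is the copy of the same face immediately above $y$. $\mathrm{Aut}^+(\mathcal{Q}_{\mathcal{V},w})$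 is the group of orientation-preserving combinatorial automorphisms of $\mathcal{Q}_{\mathcal{V},w}$; in particular each induces a bijection on the set of triangles. *)

theory Defs
  imports Main
begin

text \<open>Triangles of the surface Q_{V,w}: the copies of a face f are indexed
  by their height k, 1 \<le> k \<le> w f, linearly ordered along the coorientation
  (k = 1 lowermost, k = w f uppermost).\<close>

definition Fw :: "'f set \<Rightarrow> ('f \<Rightarrow> nat) \<Rightarrow> 'f set" where
  "Fw F w = {f \<in> F. 0 < w f}"

definition triangles :: "'f set \<Rightarrow> ('f \<Rightarrow> nat) \<Rightarrow> ('f \<times> nat) set" where
  "triangles F w = {(f, k). f \<in> F \<and> 1 \<le> k \<and> k \<le> w f}"

definition lowest :: "'f \<Rightarrow> 'f \<times> nat" where
  "lowest f = (f, 1)"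

definition uppers :: "'f set \<Rightarrow> ('f \<Rightarrow> nat) \<Rightarrow> ('f \<times> nat) set" where
  "uppers F w = {(f, w f) | f. f \<in> Fw F w}"

definition above :: "'f \<times> nat \<Rightarrow> 'f \<times> nat" where
  "above y = (fst y, Suc (snd y))"

text \<open>The (unstopped) sequence; index 0 corresponds to g_1 of the paper.
  The actual sequence g^phi(f) is its prefix up to the first element in U(F_w).\<close>
primrec gseq :: "('f \<times> nat \<Rightarrow> 'f \<times> nat) \<Rightarrow> 'f \<Rightarrow> nat \<Rightarrow> 'f \<times> nat" where
  "gseq \<phi> f 0 = \<phi> (lowest f)"
| "gseq \<phi> f (Suc i) = \<phi> (above (gseq \<phi> f i))"

definition gseq_finite :: "('f \<times> nat \<Rightarrow> 'f \<times> nat) \<Rightarrow> 'f set \<Rightarrow> ('f \<Rightarrow> nat) \<Rightarrow> 'f \<Rightarrow> bool" where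
  "gseq_finite \<phi> F w f = (\<exists>n. gseq \<phi> f n \<in> uppers F w)"

definition glast :: "('f \<times> nat \<Rightarrow> 'f \<times> nat) \<Rightarrow> 'f set \<Rightarrow> ('f \<Rightarrow> nat) \<Rightarrow> 'f \<Rightarrow> 'f \<times> nat" where
  "glast \<phi> F w f = gseq \<phi> f (LEAST n. gseq \<phi> f n \<in> uppers F w)"

end

theory Submission
  imports Defs
begin

lemma gseq_in:
  assumes bij: "bij_betw \<phi> (triangles F w) (triangles F w)"
    and f: "f \<in> Fw F w"
  shows "(\<forall>k<n. gseq \<phi> f k \<notin> uppers F w) \<Longrightarrow> gseq \<phi> f n \<in> triangles F w"
proof (induction n)
  case 0
  have "lowest f \<in> triangles F w" using f by (auto simp: lowest_def triangles_def Fw_def)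
  then show ?case using bij by (auto simp: bij_betw_def)
next
  case (Suc n)
  then have a: "gseq \<phi> f n \<in> triangles F w" "gseq \<phi> f n \<notin> uppers F w" by auto
  then have "above (gseq \<phi> f n) \<in> triangles F w"
    by (cases "gseq \<phi> f n") (auto simp: above_def triangles_def uppers_def Fw_def)
  then show ?case using bij by (auto simp: bij_betw_def)
qed

lemma gseq_key:
  assumes bij: "bij_betw \<phi> (triangles F w) (triangles F w)"
    and f: "f \<in> Fw F w" and f': "f' \<in> Fw F w"
  shows "(\<forall>k<i. gseq \<phi> f k \<notin> uppers F w) \<Longrightarrow> (\<forall>k<j. gseq \<phi> f' k \<notin> uppers F w)
     \<Longrightarrow> gseq \<phi> f i = gseq \<phi> f' j \<Longrightarrow> i = j \<and> f = f'"
proof (induction i arbitrary: j)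
  have inj: "inj_on \<phi> (triangles F w)" using bij by (auto simp: bij_betw_def)
  have ab: "above (gseq \<phi> g n) \<in> triangles F w"
    if "g \<in> Fw F w" "\<forall>k<Suc n. gseq \<phi> g k \<notin> uppers F w" for g n
  proof -
    have a: "gseq \<phi> g n \<in> triangles F w" "gseq \<phi> g n \<notin> uppers F w"
      using gseq_in[OF bij that(1), of n] that(2) by auto
    then show ?thesis
      by (cases "gseq \<phi> g n") (auto simp: above_def triangles_def uppers_def Fw_def)
  qed
  have lo: "lowest g \<in> triangles F w" if "g \<in> Fw F w" for g
    using that by (auto simp: lowest_def triangles_def Fw_def)
  {
    case 0
    show ?case
    proof (cases j)
      case 0
      then show ?thesis using "0.prems" inj lo[OF f] lo[OF f']
        by (auto simp: inj_on_def lowest_def)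
    next
      case (Suc j')
      have "lowest f = above (gseq \<phi> f' j')"
        using "0.prems" Suc inj lo[OF f] ab[OF f', of j'] by (auto simp: inj_on_def)
      moreover have "gseq \<phi> f' j' \<in> triangles F w"
        using gseq_in[OF bij f', of j'] "0.prems" Suc by auto
      ultimately show ?thesis
        by (cases "gseq \<phi> f' j'") (auto simp: lowest_def above_def triangles_def)
    qed
  next
    case (Suc i')
    show ?case
    proof (cases j)
      case 0
      have "lowest f' = above (gseq \<phi> f i')"
        using Suc.prems 0 inj lo[OF f'] ab[OF f, of i'] by (auto simp: inj_on_def)
      moreover have "gseq \<phi> f i' \<in> triangles F w"
        using gseq_in[OF bij f, of i'] Suc.prems by auto
      ultimately show ?thesis
        by (cases "gseq \<phi> f i'") (auto simp: lowest_def above_def triangles_def)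
    next
      case (Suc j')
      have "above (gseq \<phi> f i') = above (gseq \<phi> f' j')"
        using Suc.prems Suc inj ab[OF f, of i'] ab[OF f', of j'] by (auto simp: inj_on_def)
      then have "gseq \<phi> f i' = gseq \<phi> f' j'"
        by (cases "gseq \<phi> f i'", cases "gseq \<phi> f' j'") (auto simp: above_def)
      then show ?thesis using Suc.IH[of j'] Suc.prems Suc by auto
    qed
  }
qed

theorem lemma3p4:
  fixes F :: "'f set" and w :: "'f \<Rightarrow> nat" and \<phi> :: "'f \<times> nat \<Rightarrow> 'f \<times> nat"
  assumes "finite F"
    and "\<exists>f\<in>F. 0 < w f"
    and "bij_betw \<phi> (triangles F w) (triangles F w)"
  shows "(\<forall>f\<in>Fw F w. gseq_finite \<phi> F w f)
       \<and> (\<forall>f\<in>Fw F w. \<forall>f'\<in>Fw F w. f \<noteq> f' \<longrightarrow> glast \<phi> F w f \<noteq> glast \<phi> F w f')"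
proof
  have finT: "finite (triangles F w)"
  proof (rule finite_subset)
    show "triangles F w \<subseteq> Sigma F (\<lambda>f. {1..w f})" by (auto simp: triangles_def)
    show "finite (Sigma F (\<lambda>f. {1..w f}))" using assms(1) by auto
  qed
  show fin: "\<forall>f\<in>Fw F w. gseq_finite \<phi> F w f"
  proof
    fix f assume f: "f \<in> Fw F w"
    show "gseq_finite \<phi> F w f"
    proof (rule ccontr)
      assume "\<not> gseq_finite \<phi> F w f"
      then have nu: "\<forall>n. gseq \<phi> f n \<notin> uppers F w" by (auto simp: gseq_finite_def)
      have "inj (gseq \<phi> f)"
        using gseq_key[OF assms(3) f f] nu by (auto simp: inj_def)
      moreover have "range (gseq \<phi> f) \<subseteq> triangles F w"
        using gseq_in[OF assms(3) f] nu by auto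
      ultimately have "finite (UNIV :: nat set)"
        using finT by (meson finite_imageD finite_subset)
      then show False by simp
    qed
  qed
  show "\<forall>f\<in>Fw F w. \<forall>f'\<in>Fw F w. f \<noteq> f' \<longrightarrow> glast \<phi> F w f \<noteq> glast \<phi> F w f'"
  proof (intro ballI impI)
    fix f f' assume f: "f \<in> Fw F w" and f': "f' \<in> Fw F w" and ne: "f \<noteq> f'"
    define n where "n = (LEAST n. gseq \<phi> f n \<in> uppers F w)"
    define n' where "n' = (LEAST n. gseq \<phi> f' n \<in> uppers F w)"
    have p: "\<forall>k<n. gseq \<phi> f k \<notin> uppers F w" unfolding n_def using not_less_Least by blast
    have p': "\<forall>k<n'. gseq \<phi> f' k \<notin> uppers F w" unfolding n'_def using not_less_Least by blast
    show "glast \<phi> F w f \<noteq> glast \<phi> F w f'"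
      using gseq_key[OF assms(3) f f' p p'] ne unfolding glast_def n_def n'_def by auto
  qed
qed

end
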